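(* Let $\mathcal G$ be a core network with input nodes $\iota_1,\dots,\iota_n$ and output node $o$, let $\rho_k>\rho_{k+1}$ be adjacent absolutely super-simple nodes, and let $\mathcal B_i$ be an $\mathcal A_{\mathcal G}$-path component. Suppose there is $m$ and an $\iota_mo$-simple path $S_m$ such that nodes in $\mathcal B_i$ are $CS_m$-path equivalent to an absolutely simple node $\rho$ in $CS_m\setminus\mathcal B_i$ which belongs to $\mathcal L(\rho_k,\rho_{k+1})$. Then: (a) the nodes in $CS_m\setminus\mathcal B_i$ that are $CS_m$-path equivalent to $\mathcal B_i$ and are not absolutely appendage (including $\rho$) are absolutely simple nodes contained in $\mathcal L(\rho_k,\rho_{k+1})$, and none of them is absolutely super-simple; (b) for every $j=1,\dots,n$ there is an $\iota_jo$-simple path $S_j$ such that nodes in $\mathcal B_i$ are $CS_j$-path equivalent to $\rho$ in $CS_j\setminus\mathcal B_i$; (c) if $\tilde S_m$ is another $\iota_mo$-simple path such that nodes in $\mathcal B_i$ are $C\tilde S_m$-path equivalent to nodes in $C\tilde S_m\setminus\mathcal B_i$, then there is an absolutely simple node $\tau$ between $\rho_k$ and $\rho_{k+1}$ which is $C\tilde S_m$-path equivalent to $\mathcal B_i$.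
   Context: Node $b$ is downstream from $a$ if there is a directed path from $a$ to $b$. A core network: every node is upstream from $o$ and downstream from at least one input node. A simple path visits each node at most once; an $\iota_mo$-simple path is a simple path from $\iota_m$ to $o$. A node is $\iota_m$-simple if it lies on an $\iota_mo$-simple path, $\iota_m$-appendage if downstream from $\iota_m$ but not $\iota_m$-simple; absolutely simple (resp. absolutely appendage) if $\iota_m$-simple (resp. $\iota_m$-appendage) for every $m$. Absolutely super-simple: lies on every $\iota_mo$-simple path for every $m$; these are totally ordered $\rho_1>\cdots>\rho_p>o$ ($a>b$ iff $b$ comes after $a$ on every $\iota_mo$-simple path for every $m$); adjacent means consecutive. An absolutely simple node $\rho$ is between adjacent $\rho_k>\rho_{k+1}$ if for some $m$ some $\iota_mo$-simple path visits $\rho_k,\rho,\rho_{k+1}$ in that order; $\mathcal L(\rho_k,\rho_{k+1})$ is the subnetwork of absolutely simple nodes between them. $\mathcal A_{\mathcal G}$: all absolutely appendage nodes with arrows of $\mathcal G$ between them. For a subnetwork $\mathcal K$, nodes are $\mathcal K$-path equivalent if joined by directed paths inside $\mathcal K$ in both directions; a $\mathcal K$-path component is an equivalence class. For an $\iota_mo$-simple path $S$, $CS$ is the subnetwork of nodes of $\mathcal G$ not on $S$ with all arrows of $\mathcal G$ between them. *)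

theory Defs
  imports Main
begin

definition io_network :: "'v set \<Rightarrow> ('v \<times> 'v) set \<Rightarrow> (nat \<Rightarrow> 'v) \<Rightarrow> nat \<Rightarrow> 'v \<Rightarrow> bool" where
  "io_network V E \<iota> n out \<longleftrightarrow> finite V \<and> E \<subseteq> V \<times> V \<and> n \<ge> 1 \<and>
     inj_on \<iota> {1..n} \<and> \<iota> ` {1..n} \<subseteq> V \<and> out \<in> V \<and> out \<notin> \<iota> ` {1..n}"

definition downstream :: "('v \<times> 'v) set \<Rightarrow> 'v \<Rightarrow> 'v \<Rightarrow> bool" where
  "downstream E a b \<longleftrightarrow> (a, b) \<in> E\<^sup>*"

definition core_network :: "'v set \<Rightarrow> ('v \<times> 'v) set \<Rightarrow> (nat \<Rightarrow> 'v) \<Rightarrow> nat \<Rightarrow> 'v \<Rightarrow> bool" where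
  "core_network V E \<iota> n out \<longleftrightarrow> io_network V E \<iota> n out \<and>
     (\<forall>v\<in>V. downstream E v out \<and> (\<exists>m\<in>{1..n}. downstream E (\<iota> m) v))"

definition is_path :: "'v set \<Rightarrow> ('v \<times> 'v) set \<Rightarrow> 'v list \<Rightarrow> bool" where
  "is_path V E xs \<longleftrightarrow> xs \<noteq> [] \<and> set xs \<subseteq> V \<and>
     (\<forall>i. Suc i < length xs \<longrightarrow> (xs ! i, xs ! Suc i) \<in> E)"

definition simple_path :: "'v set \<Rightarrow> ('v \<times> 'v) set \<Rightarrow> 'v list \<Rightarrow> bool" where
  "simple_path V E xs \<longleftrightarrow> is_path V E xs \<and> distinct xs"

definition io_simple_path :: "'v set \<Rightarrow> ('v \<times> 'v) set \<Rightarrow> (nat \<Rightarrow> 'v) \<Rightarrow> 'v \<Rightarrow> nat \<Rightarrow> 'v list \<Rightarrow> bool" where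
  "io_simple_path V E \<iota> out m S \<longleftrightarrow> simple_path V E S \<and> hd S = \<iota> m \<and> last S = out"

definition input_simple :: "'v set \<Rightarrow> ('v \<times> 'v) set \<Rightarrow> (nat \<Rightarrow> 'v) \<Rightarrow> 'v \<Rightarrow> nat \<Rightarrow> 'v \<Rightarrow> bool" where
  "input_simple V E \<iota> out m v \<longleftrightarrow> (\<exists>S. io_simple_path V E \<iota> out m S \<and> v \<in> set S)"

definition input_appendage :: "'v set \<Rightarrow> ('v \<times> 'v) set \<Rightarrow> (nat \<Rightarrow> 'v) \<Rightarrow> 'v \<Rightarrow> nat \<Rightarrow> 'v \<Rightarrow> bool" where
  "input_appendage V E \<iota> out m v \<longleftrightarrow> v \<in> V \<and> downstream E (\<iota> m) v \<and> \<not> input_simple V E \<iota> out m v"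

definition abs_simple :: "'v set \<Rightarrow> ('v \<times> 'v) set \<Rightarrow> (nat \<Rightarrow> 'v) \<Rightarrow> nat \<Rightarrow> 'v \<Rightarrow> 'v \<Rightarrow> bool" where
  "abs_simple V E \<iota> n out v \<longleftrightarrow> (\<forall>m\<in>{1..n}. input_simple V E \<iota> out m v)"

definition abs_appendage :: "'v set \<Rightarrow> ('v \<times> 'v) set \<Rightarrow> (nat \<Rightarrow> 'v) \<Rightarrow> nat \<Rightarrow> 'v \<Rightarrow> 'v \<Rightarrow> bool" where
  "abs_appendage V E \<iota> n out v \<longleftrightarrow> (\<forall>m\<in>{1..n}. input_appendage V E \<iota> out m v)"

definition abs_super_simple :: "'v set \<Rightarrow> ('v \<times> 'v) set \<Rightarrow> (nat \<Rightarrow> 'v) \<Rightarrow> nat \<Rightarrow> 'v \<Rightarrow> 'v \<Rightarrow> bool" where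
  "abs_super_simple V E \<iota> n out v \<longleftrightarrow> v \<in> V \<and>
     (\<forall>m\<in>{1..n}. \<forall>S. io_simple_path V E \<iota> out m S \<longrightarrow> v \<in> set S)"

definition ss_greater :: "'v set \<Rightarrow> ('v \<times> 'v) set \<Rightarrow> (nat \<Rightarrow> 'v) \<Rightarrow> nat \<Rightarrow> 'v \<Rightarrow> 'v \<Rightarrow> 'v \<Rightarrow> bool" where
  "ss_greater V E \<iota> n out a b \<longleftrightarrow>
     (\<forall>m\<in>{1..n}. \<forall>S. io_simple_path V E \<iota> out m S \<longrightarrow>
        (\<exists>i j. i < j \<and> j < length S \<and> S ! i = a \<and> S ! j = b))"

definition adjacent_ss :: "'v set \<Rightarrow> ('v \<times> 'v) set \<Rightarrow> (nat \<Rightarrow> 'v) \<Rightarrow> nat \<Rightarrow> 'v \<Rightarrow> 'v \<Rightarrow> 'v \<Rightarrow> bool" where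
  "adjacent_ss V E \<iota> n out a b \<longleftrightarrow>
     abs_super_simple V E \<iota> n out a \<and> abs_super_simple V E \<iota> n out b \<and> ss_greater V E \<iota> n out a b \<and>
     \<not> (\<exists>c. abs_super_simple V E \<iota> n out c \<and> ss_greater V E \<iota> n out a c \<and> ss_greater V E \<iota> n out c b)"

definition between :: "'v set \<Rightarrow> ('v \<times> 'v) set \<Rightarrow> (nat \<Rightarrow> 'v) \<Rightarrow> nat \<Rightarrow> 'v \<Rightarrow> 'v \<Rightarrow> 'v \<Rightarrow> 'v \<Rightarrow> bool" where
  "between V E \<iota> n out a b v \<longleftrightarrow> abs_simple V E \<iota> n out v \<and>
     (\<exists>m\<in>{1..n}. \<exists>S. io_simple_path V E \<iota> out m S \<and>
        (\<exists>i j l. i < j \<and> j < l \<and> l < length S \<and> S ! i = a \<and> S ! j = v \<and> S ! l = b))"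

definition L_nodes :: "'v set \<Rightarrow> ('v \<times> 'v) set \<Rightarrow> (nat \<Rightarrow> 'v) \<Rightarrow> nat \<Rightarrow> 'v \<Rightarrow> 'v \<Rightarrow> 'v \<Rightarrow> 'v set" where
  "L_nodes V E \<iota> n out a b = {v. between V E \<iota> n out a b v}"

text \<open>Node set of A_G (with all arrows of G between them, i.e. induced subnetwork).\<close>
definition A_nodes :: "'v set \<Rightarrow> ('v \<times> 'v) set \<Rightarrow> (nat \<Rightarrow> 'v) \<Rightarrow> nat \<Rightarrow> 'v \<Rightarrow> 'v set" where
  "A_nodes V E \<iota> n out = {v. abs_appendage V E \<iota> n out v}"

definition path_equiv :: "('v \<times> 'v) set \<Rightarrow> 'v set \<Rightarrow> 'v \<Rightarrow> 'v \<Rightarrow> bool" where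
  "path_equiv E K x y \<longleftrightarrow> x \<in> K \<and> y \<in> K \<and>
     (x, y) \<in> (E \<inter> (K \<times> K))\<^sup>* \<and> (y, x) \<in> (E \<inter> (K \<times> K))\<^sup>*"

definition path_component :: "('v \<times> 'v) set \<Rightarrow> 'v set \<Rightarrow> 'v set \<Rightarrow> bool" where
  "path_component E K B \<longleftrightarrow> (\<exists>x\<in>K. B = {y. path_equiv E K x y})"

text \<open>Node set of CS: nodes of G not on S (induced subnetwork).\<close>
definition C_nodes :: "'v set \<Rightarrow> 'v list \<Rightarrow> 'v set" where
  "C_nodes V S = V - set S"

end

theory Submission
  imports Defs
begin


lemma walk_to_list:
  assumes "(a,b) \<in> R\<^sup>*"
  shows "\<exists>xs. xs \<noteq> [] \<and> hd xs = a \<and> last xs = b \<and> distinct xs \<and>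
    (\<forall>k. Suc k < length xs \<longrightarrow> (xs!k, xs!Suc k) \<in> R) \<and> set xs \<subseteq> insert b (fst ` R)"
  using assms
proof (induction rule: converse_rtrancl_induct)
  case base
  show ?case by (intro exI[of _ "[b]"]) auto
next
  case (step a y)
  then obtain ys where ys: "ys \<noteq> []" "hd ys = y" "last ys = b" "distinct ys"
    "\<forall>k. Suc k < length ys \<longrightarrow> (ys!k, ys!Suc k) \<in> R" "set ys \<subseteq> insert b (fst ` R)" by auto
  show ?case
  proof (cases "a \<in> set ys")
    case True
    then obtain t where t: "t < length ys" "ys!t = a" by (auto simp: in_set_conv_nth)
    let ?xs = "drop t ys"
    have "?xs \<noteq> []" using t by simp
    moreover have "hd ?xs = a" using t by (simp add: hd_drop_conv_nth)
    moreover have "last ?xs = b" using t ys by simp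
    moreover have "distinct ?xs" using ys by simp
    moreover have "\<forall>k. Suc k < length ?xs \<longrightarrow> (?xs!k, ?xs!Suc k) \<in> R"
      using ys(5) t by (auto simp: nth_drop)
    moreover have "set ?xs \<subseteq> insert b (fst ` R)" using set_drop_subset[of t ys] ys(6) by (rule order_trans)
    ultimately show ?thesis by (intro exI[of _ ?xs]) blast
  next
    case False
    let ?xs = "a # ys"
    have e: "\<forall>k. Suc k < length ?xs \<longrightarrow> (?xs!k, ?xs!Suc k) \<in> R"
    proof (intro allI impI)
      fix k assume k: "Suc k < length ?xs"
      show "(?xs!k, ?xs!Suc k) \<in> R"
      proof (cases k)
        case 0
        then show ?thesis using ys(1,2) step(1) by (simp add: hd_conv_nth)
      next
        case (Suc k')
        then show ?thesis using ys(5) k by simp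
      qed
    qed
    have "a \<in> fst ` R" using step(1) by force
    then have "set ?xs \<subseteq> insert b (fst ` R)" using ys(6) by simp
    then show ?thesis using e ys False by (intro exI[of _ ?xs]) simp
  qed
qed



lemma walk_to_path:
  assumes "(a,b) \<in> (E \<inter> A \<times> A)\<^sup>*" "b \<in> A" "A \<subseteq> V"
  shows "\<exists>xs. simple_path V E xs \<and> hd xs = a \<and> last xs = b \<and> set xs \<subseteq> A"
proof -
  obtain xs where xs: "xs \<noteq> []" "hd xs = a" "last xs = b" "distinct xs"
    "\<forall>k. Suc k < length xs \<longrightarrow> (xs!k, xs!Suc k) \<in> E \<inter> A \<times> A"
    "set xs \<subseteq> insert b (fst ` (E \<inter> A \<times> A))"
    using walk_to_list[OF assms(1)] by blast
  have "set xs \<subseteq> A" using xs(6) assms(2) by auto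
  then show ?thesis using xs assms(3) unfolding simple_path_def is_path_def
    by (intro exI[of _ xs]) auto
qed

lemma seg_walk:
  assumes "\<forall>k. Suc k < length xs \<longrightarrow> (xs!k, xs!Suc k) \<in> E"
    and "i \<le> j" "j < length xs" "\<forall>k. i \<le> k \<and> k \<le> j \<longrightarrow> xs!k \<in> A"
  shows "(xs!i, xs!j) \<in> (E \<inter> A \<times> A)\<^sup>*"
  using assms(2-4)
proof (induction j)
  case 0
  then show ?case by simp
next
  case (Suc j)
  show ?case
  proof (cases "i = Suc j")
    case True then show ?thesis by simp
  next
    case False
    then have "i \<le> j" using Suc by simp
    then have "(xs!i, xs!j) \<in> (E \<inter> A \<times> A)\<^sup>*" using Suc by simp
    moreover have "(xs!j, xs!Suc j) \<in> E \<inter> A \<times> A" using assms(1) Suc \<open>i \<le> j\<close> by auto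
    ultimately show ?thesis by (rule rtrancl_into_rtrancl)
  qed
qed


abbreviation avd :: "('v \<times> 'v) set \<Rightarrow> 'v set \<Rightarrow> 'v \<Rightarrow> ('v \<times> 'v) set" where
  "avd E V s \<equiv> E \<inter> (V - {s}) \<times> (V - {s})"

lemma no_avoid:
  assumes net: "io_network V E \<iota> n out" and ss: "abs_super_simple V E \<iota> n out s"
    and m: "m \<in> {1..n}" and w: "(\<iota> m, out) \<in> (avd E V s)\<^sup>*"
  shows False
proof -
  have "\<iota> m \<noteq> out" using net m unfolding io_network_def by force
  then obtain y where "(y, out) \<in> avd E V s" using w by (meson rtranclE)
  then have o: "out \<in> V - {s}" by blast
  obtain xs where xs: "simple_path V E xs" "hd xs = \<iota> m" "last xs = out" "set xs \<subseteq> V - {s}"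
    using walk_to_path[OF w o Diff_subset] by blast
  then have "io_simple_path V E \<iota> out m xs" unfolding io_simple_path_def by simp
  then have "s \<in> set xs" using ss m unfolding abs_super_simple_def by blast
  then show False using xs(4) by blast
qed

lemma exists_path:
  assumes core: "core_network V E \<iota> n out" and j: "j \<in> {1..n}"
  shows "\<exists>Q. io_simple_path V E \<iota> out j Q"
proof -
  have net: "io_network V E \<iota> n out" using core unfolding core_network_def by blast
  have "\<iota> j \<in> V" using net j unfolding io_network_def by blast
  then have "(\<iota> j, out) \<in> E\<^sup>*" using core unfolding core_network_def downstream_def by blast
  moreover have "E = E \<inter> V \<times> V" using net unfolding io_network_def by blast
  ultimately have w: "(\<iota> j, out) \<in> (E \<inter> V \<times> V)\<^sup>*" by simp
  have "out \<in> V" using net unfolding io_network_def by blast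
  then obtain xs where "simple_path V E xs" "hd xs = \<iota> j" "last xs = out"
    using walk_to_path[OF w _ order_refl] by blast
  then show ?thesis unfolding io_simple_path_def by blast
qed

lemma path_facts:
  assumes "io_simple_path V E \<iota> out j S"
  shows "S \<noteq> []" "distinct S" "set S \<subseteq> V" "S!0 = \<iota> j" "S!(length S - 1) = out"
    "\<forall>k. Suc k < length S \<longrightarrow> (S!k, S!Suc k) \<in> E"
  using assms unfolding io_simple_path_def simple_path_def is_path_def
  by (auto simp: hd_conv_nth last_conv_nth)

lemma path_seg_avoid:
  assumes S: "io_simple_path V E \<iota> out j S" and "i \<le> c" "c < length S" "a < length S" "S!a = s"
    "a < i \<or> c < a"
  shows "(S!i, S!c) \<in> (avd E V s)\<^sup>*"
proof -
  note f = path_facts[OF S]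
  have "\<forall>k. i \<le> k \<and> k \<le> c \<longrightarrow> S!k \<in> V - {s}"
  proof (intro allI impI)
    fix k assume k: "i \<le> k \<and> k \<le> c"
    then have kl: "k < length S" using assms by linarith
    then have "S!k \<in> V" using f(3) nth_mem by blast
    moreover have "S!k \<noteq> s"
    proof
      assume "S!k = s"
      then have "k = a" using nth_eq_iff_index_eq[OF f(2) kl assms(4)] assms(5) by simp
      then show False using k assms(6) by linarith
    qed
    ultimately show "S!k \<in> V - {s}" by blast
  qed
  then show ?thesis using seg_walk[OF f(6) assms(2,3)] by blast
qed

lemma path_reach:
  assumes S: "io_simple_path V E \<iota> out j S" and v: "v \<in> set S"
  shows "(\<iota> j, v) \<in> E\<^sup>*"
proof -
  note f = path_facts[OF S]
  obtain c where c: "c < length S" "S!c = v" using v by (auto simp: in_set_conv_nth)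
  have "\<forall>k. 0 \<le> k \<and> k \<le> c \<longrightarrow> S!k \<in> V" using f(3) c by auto
  then have "(S!0, S!c) \<in> (E \<inter> V \<times> V)\<^sup>*" using seg_walk[OF f(6) _ c(1)] by blast
  then have "(S!0, S!c) \<in> E\<^sup>*" using rtrancl_mono[of "E \<inter> V \<times> V" E] by blast
  then show ?thesis using f(4) c by simp
qed




lemma splice:
  assumes net: "io_network V E \<iota> n out" and ss: "abs_super_simple V E \<iota> n out s"
    and j: "j \<in> {1..n}" and m': "m' \<in> {1..n}"
    and Q: "io_simple_path V E \<iota> out j Q" and i: "i < length Q" "Q!i = s"
    and R: "io_simple_path V E \<iota> out m' R" and a: "a < length R" "R!a = s"
  shows "io_simple_path V E \<iota> out j (take i Q @ drop a R)"
proof -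
  note fQ = path_facts[OF Q]
  note fR = path_facts[OF R]
  let ?S = "take i Q @ drop a R"
  have len: "length (take i Q) = i" using i by simp
  have disj: "set (take i Q) \<inter> set (drop a R) = {}"
  proof (rule ccontr)
    assume "set (take i Q) \<inter> set (drop a R) \<noteq> {}"
    then obtain u where u1: "u \<in> set (take i Q)" and u2: "u \<in> set (drop a R)" by blast
    from u1 obtain t where t: "t < i" "Q!t = u" using i by (auto simp: in_set_conv_nth)
    from u2 obtain r where r: "r < length R - a" "R!(a+r) = u" using a by (auto simp: in_set_conv_nth)
    have "r \<noteq> 0"
    proof
      assume "r = 0"
      then have "Q!t = Q!i" using t r a i by simp
      then show False using nth_eq_iff_index_eq[OF fQ(2), of t i] t i by simp
    qed
    have w1: "(Q!0, Q!t) \<in> (avd E V s)\<^sup>*"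
      using path_seg_avoid[OF Q, of 0 t i s] t i by simp
    have w2: "(R!(a+r), R!(length R - 1)) \<in> (avd E V s)\<^sup>*"
      using path_seg_avoid[OF R, of "a+r" "length R - 1" a s] r a \<open>r \<noteq> 0\<close> by simp
    have "(\<iota> j, out) \<in> (avd E V s)\<^sup>*"
      using rtrancl_trans[OF w1[unfolded t(2)] w2[unfolded r(2)]] fQ(4) fR(5) by simp
    then show False using no_avoid[OF net ss j] by blast
  qed
  have dist: "distinct ?S" using fQ(2) fR(2) disj by simp
  have ne: "?S \<noteq> []" using a by simp
  have sub: "set ?S \<subseteq> V" using fQ(3) fR(3) set_take_subset[of i Q] set_drop_subset[of a R] by auto
  have edges: "\<forall>k. Suc k < length ?S \<longrightarrow> (?S!k, ?S!Suc k) \<in> E"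
  proof (intro allI impI)
    fix k assume k: "Suc k < length ?S"
    consider "Suc k < i" | "Suc k = i" | "i \<le> k" by linarith
    then show "(?S!k, ?S!Suc k) \<in> E"
    proof cases
      case 1
      then show ?thesis using fQ(6) i len by (simp add: nth_append)
    next
      case 2
      then have "?S!k = Q!k" using len by (simp add: nth_append)
      moreover have "?S!Suc k = Q!i" using 2 len a i by (simp add: nth_append)
      ultimately show ?thesis using fQ(6)[rule_format, of k] 2 i by simp
    next
      case 3
      have kk: "Suc (a + (k - i)) < length R" using k 3 len a by simp
      have "?S!k = R!(a + (k - i))" using 3 len a by (simp add: nth_append)
      moreover have "?S!Suc k = R!Suc (a + (k - i))" using 3 len a
        by (simp add: nth_append Suc_diff_le)
      ultimately show ?thesis using fR(6) kk by simp
    qed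
  qed
  have hd: "hd ?S = \<iota> j"
  proof (cases "i = 0")
    case True
    then show ?thesis using a i fQ(4) by (simp add: hd_drop_conv_nth)
  next
    case False
    then show ?thesis using i fQ(1) fQ(4) by (simp add: hd_append hd_conv_nth)
  qed
  have lst: "last ?S = out"
    using a R unfolding io_simple_path_def by (simp add: last_append)
  show ?thesis unfolding io_simple_path_def simple_path_def is_path_def
    using dist ne sub edges hd lst by blast
qed




lemma tau_simple:
  assumes core: "core_network V E \<iota> n out" and adj: "adjacent_ss V E \<iota> n out \<rho>k \<rho>k1"
    and tV: "\<tau> \<in> V" and down: "\<forall>j\<in>{1..n}. (\<iota> j, \<tau>) \<in> E\<^sup>*"
    and napp: "\<not> abs_appendage V E \<iota> n out \<tau>"
    and ne1: "\<tau> \<noteq> \<rho>k" and ne2: "\<tau> \<noteq> \<rho>k1"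
    and nopre: "\<forall>j\<in>{1..n}. (\<iota> j, \<tau>) \<notin> (avd E V \<rho>k)\<^sup>*"
    and nopost: "(\<tau>, out) \<notin> (avd E V \<rho>k1)\<^sup>*"
  shows "abs_simple V E \<iota> n out \<tau> \<and> between V E \<iota> n out \<rho>k \<rho>k1 \<tau>"
proof -
  have net: "io_network V E \<iota> n out" using core unfolding core_network_def by blast
  have ss1: "abs_super_simple V E \<iota> n out \<rho>k" and ss2: "abs_super_simple V E \<iota> n out \<rho>k1"
    using adj unfolding adjacent_ss_def by blast+
  obtain j0 where j0: "j0 \<in> {1..n}" "\<not> input_appendage V E \<iota> out j0 \<tau>"
    using napp unfolding abs_appendage_def by blast
  then have "input_simple V E \<iota> out j0 \<tau>"
    using tV down unfolding input_appendage_def downstream_def by blast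
  then obtain R where R: "io_simple_path V E \<iota> out j0 R" "\<tau> \<in> set R"
    unfolding input_simple_def by blast
  note fR = path_facts[OF R(1)]
  obtain c where c: "c < length R" "R!c = \<tau>" using R(2) by (auto simp: in_set_conv_nth)
  have "\<rho>k \<in> set R" using ss1 j0(1) R(1) unfolding abs_super_simple_def by blast
  then obtain a where a: "a < length R" "R!a = \<rho>k" by (auto simp: in_set_conv_nth)
  have "\<rho>k1 \<in> set R" using ss2 j0(1) R(1) unfolding abs_super_simple_def by blast
  then obtain l where l: "l < length R" "R!l = \<rho>k1" by (auto simp: in_set_conv_nth)
  have ac: "a < c"
  proof (rule ccontr)
    assume "\<not> a < c"
    then have "c < a" using a c ne1 by (metis nat_neq_iff)
    then have "(R!0, R!c) \<in> (avd E V \<rho>k)\<^sup>*"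
      using path_seg_avoid[OF R(1), of 0 c a \<rho>k] a c by simp
    then show False using nopre j0(1) fR(4) c by auto
  qed
  have cl: "c < l"
  proof (rule ccontr)
    assume "\<not> c < l"
    then have "l < c" using l c ne2 by (metis nat_neq_iff)
    then have "(R!c, R!(length R - 1)) \<in> (avd E V \<rho>k1)\<^sup>*"
      using path_seg_avoid[OF R(1), of c "length R - 1" l \<rho>k1] l c by simp
    then show False using nopost fR(5) c by auto
  qed
  have simp: "abs_simple V E \<iota> n out \<tau>"
    unfolding abs_simple_def
  proof
    fix j assume j: "j \<in> {1..n}"
    obtain Q where Q: "io_simple_path V E \<iota> out j Q" using exists_path[OF core j] by blast
    have "\<rho>k \<in> set Q" using ss1 j Q unfolding abs_super_simple_def by blast
    then obtain i where i: "i < length Q" "Q!i = \<rho>k" by (auto simp: in_set_conv_nth)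
    have P: "io_simple_path V E \<iota> out j (take i Q @ drop a R)"
      using splice[OF net ss1 j j0(1) Q i R(1) a] .
    have "(drop a R)!(c - a) = \<tau>" using ac c a by simp
    moreover have "c - a < length (drop a R)" using ac c by simp
    ultimately have "\<tau> \<in> set (drop a R)" using nth_mem by metis
    then show "input_simple V E \<iota> out j \<tau>" unfolding input_simple_def using P by auto
  qed
  have "between V E \<iota> n out \<rho>k \<rho>k1 \<tau>"
    unfolding between_def using simp j0(1) R(1) ac cl l a c by blast
  then show ?thesis using simp by blast
qed

lemma pe_refl: "x \<in> K \<Longrightarrow> path_equiv E K x x"
  unfolding path_equiv_def by simp

lemma pe_sym: "path_equiv E K x y \<Longrightarrow> path_equiv E K y x"
  unfolding path_equiv_def by blast

lemma pe_trans: "path_equiv E K x y \<Longrightarrow> path_equiv E K y z \<Longrightarrow> path_equiv E K x z"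
  unfolding path_equiv_def by (meson rtrancl_trans)

lemma pe_restrict:
  assumes "(a,b) \<in> (E \<inter> C \<times> C)\<^sup>*" "path_equiv E C a y" "path_equiv E C b y"
  shows "(a,b) \<in> (E \<inter> {v. path_equiv E C v y} \<times> {v. path_equiv E C v y})\<^sup>*"
  using assms
proof (induction rule: converse_rtrancl_induct)
  case base
  then show ?case by simp
next
  case (step a z)
  have zC: "z \<in> C" using step(1) by blast
  have "(z, b) \<in> (E \<inter> C \<times> C)\<^sup>*" using step(2) .
  moreover have "(b, y) \<in> (E \<inter> C \<times> C)\<^sup>*" "(y, b) \<in> (E \<inter> C \<times> C)\<^sup>*"
    using step(5) unfolding path_equiv_def by blast+
  moreover have "(y, a) \<in> (E \<inter> C \<times> C)\<^sup>*" using step(4) unfolding path_equiv_def by blast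
  moreover have "y \<in> C" using step(4) unfolding path_equiv_def by blast
  ultimately have "path_equiv E C z y" unfolding path_equiv_def using zC step(1)
    by (meson rtrancl_trans r_into_rtrancl rtrancl_into_rtrancl)
  then have "(z,b) \<in> (E \<inter> {v. path_equiv E C v y} \<times> {v. path_equiv E C v y})\<^sup>*"
    using step by blast
  moreover have "(a, z) \<in> E \<inter> {v. path_equiv E C v y} \<times> {v. path_equiv E C v y}"
    using step(1,4) \<open>path_equiv E C z y\<close> by blast
  ultimately show ?case by (meson converse_rtrancl_into_rtrancl)
qed

lemma pe_transfer:
  assumes "path_equiv E C x y" "{v. path_equiv E C v y} \<subseteq> C'"
  shows "path_equiv E C' x y"
proof -
  let ?K = "{v. path_equiv E C v y}"
  have y: "path_equiv E C y y" using assms(1) pe_refl unfolding path_equiv_def by metis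
  have mono: "(E \<inter> ?K \<times> ?K)\<^sup>* \<subseteq> (E \<inter> C' \<times> C')\<^sup>*" using assms(2) by (intro rtrancl_mono) blast
  have "(x,y) \<in> (E \<inter> ?K \<times> ?K)\<^sup>*"
    using pe_restrict[of x y E C y] assms(1) y unfolding path_equiv_def by blast
  moreover have "(y,x) \<in> (E \<inter> ?K \<times> ?K)\<^sup>*"
    using pe_restrict[of y x E C y] assms(1) y unfolding path_equiv_def by blast
  ultimately show ?thesis using mono assms unfolding path_equiv_def by blast
qed




lemma rt_sub: "A \<subseteq> B \<Longrightarrow> (E \<inter> A \<times> A)\<^sup>* \<subseteq> (E \<inter> B \<times> B)\<^sup>*"
  by (rule rtrancl_mono) blast



theorem lemma3p22:
  fixes V :: "'v set" and E :: "('v \<times> 'v) set" and \<iota> :: "nat \<Rightarrow> 'v"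
    and n :: nat and out :: 'v and \<rho>k \<rho>k1 \<rho> :: 'v and B :: "'v set"
    and m :: nat and Sm :: "'v list"
  assumes core: "core_network V E \<iota> n out"
    and adj: "adjacent_ss V E \<iota> n out \<rho>k \<rho>k1"
    and Bcomp: "path_component E (A_nodes V E \<iota> n out) B"
    and m: "m \<in> {1..n}"
    and Sm: "io_simple_path V E \<iota> out m Sm"
    and \<rho>out: "\<rho> \<in> C_nodes V Sm - B"
    and \<rho>simple: "abs_simple V E \<iota> n out \<rho>"
    and \<rho>L: "\<rho> \<in> L_nodes V E \<iota> n out \<rho>k \<rho>k1"
    and Beq: "\<forall>x\<in>B. path_equiv E (C_nodes V Sm) x \<rho>"
  shows
    "(\<forall>\<nu>\<in>C_nodes V Sm - B.
        (\<forall>x\<in>B. path_equiv E (C_nodes V Sm) x \<nu>) \<and> \<not> abs_appendage V E \<iota> n out \<nu> \<longrightarrow>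
          abs_simple V E \<iota> n out \<nu> \<and> \<nu> \<in> L_nodes V E \<iota> n out \<rho>k \<rho>k1 \<and>
          \<not> abs_super_simple V E \<iota> n out \<nu>)
     \<and> (\<forall>j\<in>{1..n}. \<exists>Sj. io_simple_path V E \<iota> out j Sj \<and> \<rho> \<in> C_nodes V Sj - B \<and>
          (\<forall>x\<in>B. path_equiv E (C_nodes V Sj) x \<rho>))
     \<and> (\<forall>St. io_simple_path V E \<iota> out m St \<longrightarrow>
          (\<exists>y\<in>C_nodes V St - B. \<forall>x\<in>B. path_equiv E (C_nodes V St) x y) \<longrightarrow>
          (\<exists>\<tau>. abs_simple V E \<iota> n out \<tau> \<and> between V E \<iota> n out \<rho>k \<rho>k1 \<tau> \<and>
               (\<forall>x\<in>B. path_equiv E (C_nodes V St) x \<tau>)))"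

proof -
  have net: "io_network V E \<iota> n out" using core unfolding core_network_def by blast
  have ss1: "abs_super_simple V E \<iota> n out \<rho>k" and ss2: "abs_super_simple V E \<iota> n out \<rho>k1"
    using adj unfolding adjacent_ss_def by blast+
  have kSm: "\<rho>k \<in> set Sm" "\<rho>k1 \<in> set Sm"
    using ss1 ss2 m Sm unfolding abs_super_simple_def by blast+
  let ?C = "C_nodes V Sm"
  have Csub1: "?C \<subseteq> V - {\<rho>k}" and Csub2: "?C \<subseteq> V - {\<rho>k1}" and CV: "?C \<subseteq> V"
    using kSm unfolding C_nodes_def by blast+
  have mono1: "(E \<inter> ?C \<times> ?C)\<^sup>* \<subseteq> (avd E V \<rho>k)\<^sup>*" using rt_sub[OF Csub1] .
  have mono2: "(E \<inter> ?C \<times> ?C)\<^sup>* \<subseteq> (avd E V \<rho>k1)\<^sup>*" using rt_sub[OF Csub2] .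
  have monoE: "(E \<inter> ?C \<times> ?C)\<^sup>* \<subseteq> E\<^sup>*" by (rule rtrancl_mono) blast
  obtain x0 where x0: "x0 \<in> A_nodes V E \<iota> n out" "B = {y. path_equiv E (A_nodes V E \<iota> n out) x0 y}"
    using Bcomp unfolding path_component_def by blast
  have x0B: "x0 \<in> B" using pe_refl[OF x0(1)] x0(2) by simp
  have x0app: "abs_appendage V E \<iota> n out x0" using x0(1) unfolding A_nodes_def by simp
  have x0\<rho>: "path_equiv E ?C x0 \<rho>" using Beq x0B by blast
  obtain m1 S1 i1 j1 l1 where m1: "m1 \<in> {1..n}" and S1: "io_simple_path V E \<iota> out m1 S1"
    and idx: "i1 < j1" "j1 < l1" "l1 < length S1" "S1!i1 = \<rho>k" "S1!j1 = \<rho>" "S1!l1 = \<rho>k1"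
    using \<rho>L unfolding L_nodes_def between_def by blast
  note f1 = path_facts[OF S1]
  have \<rho>post: "(\<rho>, out) \<in> (avd E V \<rho>k)\<^sup>*"
    using path_seg_avoid[OF S1, of j1 "length S1 - 1" i1 \<rho>k] idx f1(5) by simp
  have \<rho>pre: "(\<iota> m1, \<rho>) \<in> (avd E V \<rho>k1)\<^sup>*"
    using path_seg_avoid[OF S1, of 0 j1 l1 \<rho>k1] idx f1(4) by simp
  define NoPre where "NoPre v \<longleftrightarrow> (\<forall>j\<in>{1..n}. (\<iota> j, v) \<notin> (avd E V \<rho>k)\<^sup>*)" for v
  define NoPost where "NoPost v \<longleftrightarrow> (v, out) \<notin> (avd E V \<rho>k1)\<^sup>*" for v
  have pre\<rho>: "NoPre \<rho>"
    unfolding NoPre_def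
  proof (intro ballI notI)
    fix j assume j: "j \<in> {1..n}" and w: "(\<iota> j, \<rho>) \<in> (avd E V \<rho>k)\<^sup>*"
    show False using no_avoid[OF net ss1 j rtrancl_trans[OF w \<rho>post]] .
  qed
  have post\<rho>: "NoPost \<rho>"
    unfolding NoPost_def
  proof
    assume w: "(\<rho>, out) \<in> (avd E V \<rho>k1)\<^sup>*"
    show False using no_avoid[OF net ss2 m1 rtrancl_trans[OF \<rho>pre w]] .
  qed
  have pre_back: "NoPre v" if "(v,w) \<in> (avd E V \<rho>k)\<^sup>*" "NoPre w" for v w
    using that unfolding NoPre_def by (meson rtrancl_trans)
  have post_fwd: "NoPost w" if "(v,w) \<in> (avd E V \<rho>k1)\<^sup>*" "NoPost v" for v w
    using that unfolding NoPost_def by (meson rtrancl_trans)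
  have down\<rho>: "\<forall>j\<in>{1..n}. (\<iota> j, \<rho>) \<in> E\<^sup>*"
  proof
    fix j assume "j \<in> {1..n}"
    then obtain S where "io_simple_path V E \<iota> out j S" "\<rho> \<in> set S"
      using \<rho>simple unfolding abs_simple_def input_simple_def by blast
    then show "(\<iota> j, \<rho>) \<in> E\<^sup>*" using path_reach by metis
  qed
  have \<rho>C: "\<rho> \<in> ?C" using \<rho>out by blast

  have partA: "\<forall>\<nu>\<in>C_nodes V Sm - B.
        (\<forall>x\<in>B. path_equiv E (C_nodes V Sm) x \<nu>) \<and> \<not> abs_appendage V E \<iota> n out \<nu> \<longrightarrow>
          abs_simple V E \<iota> n out \<nu> \<and> \<nu> \<in> L_nodes V E \<iota> n out \<rho>k \<rho>k1 \<and>
          \<not> abs_super_simple V E \<iota> n out \<nu>"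
  proof (intro ballI impI)
    fix \<nu> assume \<nu>: "\<nu> \<in> C_nodes V Sm - B"
      and h: "(\<forall>x\<in>B. path_equiv E (C_nodes V Sm) x \<nu>) \<and> \<not> abs_appendage V E \<iota> n out \<nu>"
    have "path_equiv E ?C \<nu> \<rho>" using pe_trans[OF pe_sym[of E ?C x0 \<nu>] x0\<rho>] h x0B by blast
    then have r1: "(\<nu>,\<rho>) \<in> (E \<inter> ?C \<times> ?C)\<^sup>*" and r2: "(\<rho>,\<nu>) \<in> (E \<inter> ?C \<times> ?C)\<^sup>*"
      unfolding path_equiv_def by blast+
    have "NoPre \<nu>" using pre_back[OF subsetD[OF mono1 r1] pre\<rho>] .
    moreover have "NoPost \<nu>" using post_fwd[OF subsetD[OF mono2 r2] post\<rho>] .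
    moreover have "\<forall>j\<in>{1..n}. (\<iota> j, \<nu>) \<in> E\<^sup>*" using down\<rho> subsetD[OF monoE r2] by (meson rtrancl_trans)
    moreover have "\<nu> \<in> V" "\<nu> \<noteq> \<rho>k" "\<nu> \<noteq> \<rho>k1" using \<nu> Csub1 Csub2 by blast+
    ultimately have "abs_simple V E \<iota> n out \<nu> \<and> between V E \<iota> n out \<rho>k \<rho>k1 \<nu>"
      using tau_simple[OF core adj, of \<nu>] h unfolding NoPre_def NoPost_def by blast
    moreover have "\<not> abs_super_simple V E \<iota> n out \<nu>"
      using \<nu> m Sm unfolding abs_super_simple_def C_nodes_def by blast
    ultimately show "abs_simple V E \<iota> n out \<nu> \<and> \<nu> \<in> L_nodes V E \<iota> n out \<rho>k \<rho>k1 \<and>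
          \<not> abs_super_simple V E \<iota> n out \<nu>" unfolding L_nodes_def by blast
  qed

  have partB: "\<forall>j\<in>{1..n}. \<exists>Sj. io_simple_path V E \<iota> out j Sj \<and> \<rho> \<in> C_nodes V Sj - B \<and>
          (\<forall>x\<in>B. path_equiv E (C_nodes V Sj) x \<rho>)"
  proof
    fix j assume j: "j \<in> {1..n}"
    obtain Q where Q: "io_simple_path V E \<iota> out j Q" using exists_path[OF core j] by blast
    note fQ = path_facts[OF Q]
    have "\<rho>k \<in> set Q" using ss1 j Q unfolding abs_super_simple_def by blast
    then obtain i where i: "i < length Q" "Q!i = \<rho>k" by (auto simp: in_set_conv_nth)
    obtain ik where ik: "ik < length Sm" "Sm!ik = \<rho>k" using kSm(1) by (auto simp: in_set_conv_nth)
    let ?Sj = "take i Q @ drop ik Sm"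
    have P: "io_simple_path V E \<iota> out j ?Sj" using splice[OF net ss1 j m Q i Sm ik] .
    let ?K = "{v. path_equiv E ?C v \<rho>}"
    have Ksub: "?K \<subseteq> C_nodes V ?Sj"
    proof
      fix v assume "v \<in> ?K"
      then have vC: "v \<in> ?C" and vr: "(v,\<rho>) \<in> (E \<inter> ?C \<times> ?C)\<^sup>*" unfolding path_equiv_def by blast+
      have "v \<notin> set (take i Q)"
      proof
        assume "v \<in> set (take i Q)"
        then obtain t where t: "t < i" "Q!t = v" using i by (auto simp: in_set_conv_nth)
        have "(Q!0, Q!t) \<in> (avd E V \<rho>k)\<^sup>*" using path_seg_avoid[OF Q, of 0 t i \<rho>k] t i by simp
        then have "(\<iota> j, \<rho>) \<in> (avd E V \<rho>k)\<^sup>*"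
          using fQ(4) t(2) subsetD[OF mono1 vr] by (metis rtrancl_trans)
        then show False using pre\<rho> j unfolding NoPre_def by blast
      qed
      moreover have "v \<notin> set (drop ik Sm)" using vC set_drop_subset[of ik Sm] unfolding C_nodes_def by blast
      ultimately show "v \<in> C_nodes V ?Sj" using vC unfolding C_nodes_def by simp
    qed
    have "\<rho> \<in> ?K" using pe_refl[OF \<rho>C] by simp
    then have "\<rho> \<in> C_nodes V ?Sj - B" using Ksub \<rho>out by blast
    moreover have "\<forall>x\<in>B. path_equiv E (C_nodes V ?Sj) x \<rho>"
      using Beq pe_transfer[OF _ Ksub] by blast
    ultimately show "\<exists>Sj. io_simple_path V E \<iota> out j Sj \<and> \<rho> \<in> C_nodes V Sj - B \<and>
          (\<forall>x\<in>B. path_equiv E (C_nodes V Sj) x \<rho>)" using P by blast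
  qed

  have partC: "\<forall>St. io_simple_path V E \<iota> out m St \<longrightarrow>
          (\<exists>y\<in>C_nodes V St - B. \<forall>x\<in>B. path_equiv E (C_nodes V St) x y) \<longrightarrow>
          (\<exists>\<tau>. abs_simple V E \<iota> n out \<tau> \<and> between V E \<iota> n out \<rho>k \<rho>k1 \<tau> \<and>
               (\<forall>x\<in>B. path_equiv E (C_nodes V St) x \<tau>))"
  proof (intro allI impI)
    fix St assume St: "io_simple_path V E \<iota> out m St"
      and ex: "\<exists>y\<in>C_nodes V St - B. \<forall>x\<in>B. path_equiv E (C_nodes V St) x y"
    let ?Ct = "C_nodes V St"
    obtain y where y: "y \<in> ?Ct - B" "\<forall>x\<in>B. path_equiv E ?Ct x y" using ex by blast
    have kSt: "\<rho>k \<in> set St" "\<rho>k1 \<in> set St"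
      using ss1 ss2 m St unfolding abs_super_simple_def by blast+
    have Ctsub1: "?Ct \<subseteq> V - {\<rho>k}" and Ctsub2: "?Ct \<subseteq> V - {\<rho>k1}"
      using kSt unfolding C_nodes_def by blast+
    let ?Kt = "{v. path_equiv E ?Ct v x0}"
    have "\<exists>\<tau>\<in>?Kt. \<not> abs_appendage V E \<iota> n out \<tau>"
    proof (rule ccontr)
      assume "\<not> (\<exists>\<tau>\<in>?Kt. \<not> abs_appendage V E \<iota> n out \<tau>)"
      then have "?Kt \<subseteq> A_nodes V E \<iota> n out" unfolding A_nodes_def by blast
      moreover have "path_equiv E ?Ct y x0" using pe_sym[OF y(2)[rule_format, OF x0B]] .
      ultimately have "path_equiv E (A_nodes V E \<iota> n out) y x0" using pe_transfer[of E ?Ct y x0] by blast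
      then have "path_equiv E (A_nodes V E \<iota> n out) x0 y" by (rule pe_sym)
      then have "y \<in> B" using x0(2) by simp
      then show False using y(1) by blast
    qed
    then obtain \<tau> where \<tau>: "path_equiv E ?Ct \<tau> x0" "\<not> abs_appendage V E \<iota> n out \<tau>" by blast
    then have t1: "(\<tau>,x0) \<in> (E \<inter> ?Ct \<times> ?Ct)\<^sup>*" and t2: "(x0,\<tau>) \<in> (E \<inter> ?Ct \<times> ?Ct)\<^sup>*"
      and tC: "\<tau> \<in> ?Ct" unfolding path_equiv_def by blast+
    have x1: "(x0,\<rho>) \<in> (E \<inter> ?C \<times> ?C)\<^sup>*" and x2: "(\<rho>,x0) \<in> (E \<inter> ?C \<times> ?C)\<^sup>*"
      using x0\<rho> unfolding path_equiv_def by blast+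
    have "NoPre x0" using pre_back[OF subsetD[OF mono1 x1] pre\<rho>] .
    then have "NoPre \<tau>" using pre_back[OF subsetD[OF rt_sub[OF Ctsub1] t1]] by blast
    moreover have "NoPost x0" using post_fwd[OF subsetD[OF mono2 x2] post\<rho>] .
    then have "NoPost \<tau>" using post_fwd[OF subsetD[OF rt_sub[OF Ctsub2] t2]] by blast
    moreover have "(x0, \<tau>) \<in> E\<^sup>*" using t2 rtrancl_mono[of "E \<inter> ?Ct \<times> ?Ct" E] by blast
    then have "\<forall>j\<in>{1..n}. (\<iota> j, \<tau>) \<in> E\<^sup>*"
      using x0app unfolding abs_appendage_def input_appendage_def downstream_def
      by (meson rtrancl_trans)
    moreover have "\<tau> \<in> V" "\<tau> \<noteq> \<rho>k" "\<tau> \<noteq> \<rho>k1" using tC Ctsub1 Ctsub2 by blast+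
    ultimately have res: "abs_simple V E \<iota> n out \<tau> \<and> between V E \<iota> n out \<rho>k \<rho>k1 \<tau>"
      using tau_simple[OF core adj, of \<tau>] \<tau>(2) unfolding NoPre_def NoPost_def by blast
    have "\<forall>x\<in>B. path_equiv E ?Ct x \<tau>"
    proof
      fix x assume "x \<in> B"
      then have "path_equiv E ?Ct x y" using y(2) by blast
      moreover have "path_equiv E ?Ct y x0" using pe_sym[OF y(2)[rule_format, OF x0B]] .
      ultimately show "path_equiv E ?Ct x \<tau>" using pe_trans[OF pe_trans pe_sym[OF \<tau>(1)]] by blast
    qed
    then show "\<exists>\<tau>. abs_simple V E \<iota> n out \<tau> \<and> between V E \<iota> n out \<rho>k \<rho>k1 \<tau> \<and>
               (\<forall>x\<in>B. path_equiv E (C_nodes V St) x \<tau>)" using res by blast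
  qed
  show ?thesis using partA partB partC by blast
qed


end
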